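(* For any feasible instance of $1|r_j;\mathrm{pmtn}|E$ with wake-up cost $L$, there is an optimal schedule $S$ (one minimizing $E$) with the following property: for every small gap $[u,t)$ of $S$ and every job $j$, if $C_j(S)\ge t$ then $r_j\ge t$.
   Context: Time is discrete (slots $[t,t+1)$). There are $n$ jobs, job $j$ with integer processing time $p_j\ge1$, release time $r_j$, deadline $d_j$; a feasible (preemptive) schedule assigns to each slot at most one job so that every job $j$ receives exactly $p_j$ slots in $[r_j,d_j)$. $C_j(S)$ is the completion time of job $j$. Blocks are maximal busy intervals; a gap is a maximal finite idle interval (between two blocks). If the blocks of $S$ are $[u_1,t_1),\dots,[u_q,t_q)$ in order, $E(S)=\sum_{i=2}^q\min\{u_i-t_{i-1},L\}$. A gap is small if its length is at most $L$ and large otherwise. *)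

theory Defs
  imports Complex_Main
begin

text \<open>Time slots are natural numbers; slot t is the interval [t,t+1).
  Jobs are indexed by 0..<n. A schedule assigns to each slot at most one job
  (None = idle).\<close>

type_synonym schedule = "nat \<Rightarrow> nat option"

definition feasible ::
  "nat \<Rightarrow> (nat \<Rightarrow> nat) \<Rightarrow> (nat \<Rightarrow> nat) \<Rightarrow> (nat \<Rightarrow> nat) \<Rightarrow> schedule \<Rightarrow> bool" where
  "feasible n p r d S \<longleftrightarrow>
     (\<forall>t j. S t = Some j \<longrightarrow> j < n) \<and>
     (\<forall>j<n. finite {t. S t = Some j} \<and> card {t. S t = Some j} = p j \<and>
            (\<forall>t. S t = Some j \<longrightarrow> r j \<le> t \<and> t < d j))"

definition busy :: "schedule \<Rightarrow> nat \<Rightarrow> bool" where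
  "busy S t \<longleftrightarrow> S t \<noteq> None"

definition is_gap :: "schedule \<Rightarrow> nat \<Rightarrow> nat \<Rightarrow> bool" where
  "is_gap S u t \<longleftrightarrow> 0 < u \<and> u < t \<and> busy S (u - 1) \<and> busy S t \<and>
     (\<forall>s. u \<le> s \<and> s < t \<longrightarrow> \<not> busy S s)"

definition energy :: "real \<Rightarrow> schedule \<Rightarrow> real" where
  "energy L S = (\<Sum>(u,t)\<in>{(u,t). is_gap S u t}. min (real (t - u)) L)"

definition completion :: "schedule \<Rightarrow> nat \<Rightarrow> nat" where
  "completion S j = Max {t. S t = Some j} + 1"

definition optimal ::
  "nat \<Rightarrow> (nat \<Rightarrow> nat) \<Rightarrow> (nat \<Rightarrow> nat) \<Rightarrow> (nat \<Rightarrow> nat) \<Rightarrow> real \<Rightarrow> schedule \<Rightarrow> bool" where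
  "optimal n p r d L S \<longleftrightarrow> feasible n p r d S \<and>
     (\<forall>S'. feasible n p r d S' \<longrightarrow> energy L S \<le> energy L S')"

end

theory Submission
  imports Defs
begin

definition gaps :: "schedule \<Rightarrow> (nat \<times> nat) set" where
  "gaps S = {(u,t). is_gap S u t}"

definition gf :: "real \<Rightarrow> nat \<times> nat \<Rightarrow> real" where
  "gf L = (\<lambda>(u,t). min (real (t - u)) L)"

lemma energy_alt: "energy L S = sum (gf L) (gaps S)"
  unfolding energy_def gaps_def gf_def by simp

lemma gaps_finite:
  assumes "finite {x. S x \<noteq> None}"
  shows "finite (gaps S)"
proof -
  have "gaps S \<subseteq> (\<lambda>(t,u). (u,t)) ` (SIGMA t:{x. S x \<noteq> None}. {..<t})"
    unfolding gaps_def is_gap_def busy_def by (auto simp: image_iff)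
  then show ?thesis using assms
    by (meson finite_SigmaI finite_imageI finite_lessThan finite_subset)
qed

lemma gap_unique:
  assumes "is_gap S a b" "is_gap S a' b'" "a \<le> x" "x < b" "a' \<le> x" "x < b'"
  shows "a = a' \<and> b = b'"
proof -
  have "\<not> b < b'" using assms unfolding is_gap_def by force
  moreover have "\<not> b' < b" using assms unfolding is_gap_def by force
  moreover have "\<not> a < a'"
  proof
    assume h: "a < a'"
    then have "a \<le> a' - 1" "a' - 1 < b" using assms by auto
    then have "\<not> busy S (a' - 1)" using assms(1) unfolding is_gap_def by blast
    then show False using assms(2) unfolding is_gap_def by blast
  qed
  moreover have "\<not> a' < a"
  proof
    assume h: "a' < a"
    then have "a' \<le> a - 1" "a - 1 < b'" using assms by auto
    then have "\<not> busy S (a - 1)" using assms(2) unfolding is_gap_def by blast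
    then show False using assms(1) unfolding is_gap_def by blast
  qed
  ultimately show ?thesis by auto
qed

lemma gapB_char:
  assumes g: "is_gap S u t"
  shows "is_gap (S(t-1 := Some j)) a b \<longleftrightarrow>
         (is_gap S a b \<and> (a,b) \<noteq> (u,t)) \<or> (u < t-1 \<and> a = u \<and> b = t-1)"
proof
  assume h: "is_gap (S(t-1 := Some j)) a b"
  have idle: "\<And>x. a \<le> x \<Longrightarrow> x < b \<Longrightarrow> S x = None \<and> x \<noteq> t-1"
    using h unfolding is_gap_def busy_def by (metis fun_upd_apply option.distinct(1))
  show "(is_gap S a b \<and> (a,b) \<noteq> (u,t)) \<or> (u < t-1 \<and> a = u \<and> b = t-1)"
  proof (cases "b = t-1")
    case True
    have "a = u"
    proof -
      have "\<not> a < u"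
      proof
        assume "a < u"
        then have "a \<le> u-1" "u-1 < b" using True g by (auto simp: is_gap_def)
        then have "S (u-1) = None" using idle by auto
        with g show False by (simp add: is_gap_def busy_def)
      qed
      moreover have "\<not> u < a"
      proof
        assume "u < a"
        then have "u \<le> a-1" "a-1 < t" using h True unfolding is_gap_def by auto
        then have "S (a-1) = None" using g unfolding is_gap_def busy_def by auto
        moreover have "a - 1 \<noteq> t - 1" using h True unfolding is_gap_def by auto
        ultimately show False using h unfolding is_gap_def busy_def by auto
      qed
      ultimately show ?thesis by auto
    qed
    then show ?thesis using True h by (auto simp: is_gap_def)
  next
    case False
    have a1: "a - 1 \<noteq> t - 1"
    proof
      assume "a - 1 = t - 1"
      then have "a = t" using h g unfolding is_gap_def by auto
      then show False using idle[of a] g h unfolding is_gap_def busy_def by auto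
    qed
    have "is_gap S a b" using h False a1 idle unfolding is_gap_def busy_def by auto
    moreover have "(a,b) \<noteq> (u,t)"
    proof
      assume "(a,b) = (u,t)"
      then show False using idle[of "t-1"] g unfolding is_gap_def by force
    qed
    ultimately show ?thesis by auto
  qed
next
  assume h: "(is_gap S a b \<and> (a,b) \<noteq> (u,t)) \<or> (u < t-1 \<and> a = u \<and> b = t-1)"
  then show "is_gap (S(t-1 := Some j)) a b"
  proof
    assume h1: "is_gap S a b \<and> (a,b) \<noteq> (u,t)"
    have "\<not> (a \<le> t - 1 \<and> t - 1 < b)"
    proof
      assume "a \<le> t - 1 \<and> t - 1 < b"
      moreover have "u \<le> t-1" "t-1 < t" using g by (auto simp: is_gap_def)
      ultimately have "a = u \<and> b = t" using gap_unique[of S a b u t "t-1"] h1 g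
        by blast
      then show False using h1 by auto
    qed
    moreover have "S (t-1) = None" using g unfolding is_gap_def busy_def by force
    moreover have "a - 1 \<noteq> t - 1"
    proof
      assume "a - 1 = t - 1"
      then have "a = t" using h1 g unfolding is_gap_def by auto
      then show False using h1 g unfolding is_gap_def by auto
    qed
    moreover have "b \<noteq> t - 1"
      using h1 \<open>S (t-1) = None\<close> unfolding is_gap_def busy_def by auto
    ultimately show ?thesis using h1 unfolding is_gap_def busy_def by auto
  next
    assume h2: "u < t-1 \<and> a = u \<and> b = t-1"
    have "u - 1 \<noteq> t - 1" using h2 by auto
    moreover have "\<forall>s. u \<le> s \<and> s < t-1 \<longrightarrow> (S(t-1 := Some j)) s = None"
      using g unfolding is_gap_def busy_def by auto
    ultimately show ?thesis using g h2 unfolding is_gap_def busy_def by auto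
  qed
qed

lemma energy_fill:
  assumes g: "is_gap S u t" and sm: "real (t-u) \<le> L" and fin: "finite {x. S x \<noteq> None}"
  shows "energy L (S(t-1 := Some j)) = energy L S - 1"
proof -
  let ?G = "gaps S"
  have G1: "gaps (S(t-1 := Some j)) = (?G - {(u,t)}) \<union> (if u < t-1 then {(u,t-1)} else {})"
  proof -
    have "\<And>a b. is_gap (S(t-1 := Some j)) a b \<longleftrightarrow>
         (is_gap S a b \<and> (a,b) \<noteq> (u,t)) \<or> (u < t-1 \<and> a = u \<and> b = t-1)"
      by (rule gapB_char[OF g])
    then show ?thesis unfolding gaps_def by (auto split: if_splits)
  qed
  have finG: "finite ?G" using gaps_finite[OF fin] .
  have ut: "(u,t) \<in> ?G" using g by (simp add: gaps_def)
  have e0: "sum (gf L) ?G = gf L (u,t) + sum (gf L) (?G - {(u,t)})"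
    using finG ut by (simp add: sum.remove)
  have ult: "u < t" using g by (simp add: is_gap_def)
  show ?thesis
  proof (cases "u < t-1")
    case True
    have nin: "(u,t-1) \<notin> ?G - {(u,t)}"
    proof
      assume "(u,t-1) \<in> ?G - {(u,t)}"
      then have "busy S (t-1)" by (simp add: gaps_def is_gap_def)
      moreover have "\<not> busy S (t-1)" using g True unfolding is_gap_def by auto
      ultimately show False by simp
    qed
    have "gaps (S(t-1 := Some j)) = insert (u,t-1) (?G - {(u,t)})"
      using G1 True by simp
    then have "energy L (S(t-1 := Some j)) = sum (gf L) (insert (u,t-1) (?G - {(u,t)}))"
      unfolding energy_alt by simp
    also have "\<dots> = gf L (u,t-1) + sum (gf L) (?G - {(u,t)})"
      using finG nin by simp
    also have "gf L (u,t-1) = real (t-u) - 1"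
      using True sm by (simp add: gf_def of_nat_diff)
    also have "gf L (u,t) = real (t-u)" using sm by (simp add: gf_def)
    then have "sum (gf L) (?G - {(u,t)}) = energy L S - real (t-u)"
      using e0 by (simp add: energy_alt)
    finally show ?thesis by (simp add: fun_upd_def)
  next
    case False
    then have "t - u = 1" using ult by simp
    then have "gf L (u,t) = 1" using sm by (simp add: gf_def)
    moreover have "gaps (S(t-1 := Some j)) = ?G - {(u,t)}"
      using G1 False by simp
    ultimately show ?thesis using e0 unfolding energy_alt by simp
  qed
qed

lemma min_split:
  fixes L :: real
  assumes "L \<ge> 0" "a \<le> s" "s < b"
  shows "min (real (b-a)) L \<le> (if a < s then min (real (s-a)) L else 0) + 1 +
           (if s+1 < b then min (real (b-(s+1))) L else 0)"
proof -
  have e: "real (b-a) = real (s-a) + 1 + real (b-(s+1))" using assms by (simp add: of_nat_diff)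
  show ?thesis
  proof (cases "a < s")
    case True
    show ?thesis
    proof (cases "s+1<b")
      case True
      then show ?thesis using \<open>a<s\<close> e assms by (simp add: min_def)
    next
      case False
      then have "b - (s+1) = 0" by simp
      then show ?thesis using \<open>a<s\<close> e assms by (simp add: min_def)
    qed
  next
    case False
    then have "s - a = 0" by simp
    show ?thesis
    proof (cases "s+1<b")
      case True
      then show ?thesis using \<open>s-a=0\<close> False e assms by (simp add: min_def)
    next
      case False
      then have "b - (s+1) = 0" by simp
      then show ?thesis using \<open>s-a=0\<close> \<open>\<not> a < s\<close> e assms by (simp add: min_def)
    qed
  qed
qed

lemma energy_idle:
  assumes bs: "S s \<noteq> None" and fin: "finite {x. S x \<noteq> None}" and L0: "L \<ge> 0"
  shows "energy L (S(s := None)) \<le> energy L S + 1"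
proof -
  let ?S' = "S(s := None)"
  let ?G = "gaps S" and ?G' = "gaps ?S'"
  have fin': "finite {x. ?S' x \<noteq> None}" by (rule finite_subset[OF _ fin]) auto
  have finG: "finite ?G" using gaps_finite[OF fin] .
  have finG': "finite ?G'" using gaps_finite[OF fin'] .
  have nn: "\<And>x. gf L x \<ge> 0" using L0 by (auto simp: gf_def)
  have key: "\<And>a b. (a,b) \<in> ?G' \<Longrightarrow> \<not> (a \<le> s \<and> s < b) \<Longrightarrow> (a,b) \<in> ?G"
  proof -
    fix a b assume h: "(a,b) \<in> ?G'" "\<not> (a \<le> s \<and> s < b)"
    then have g: "is_gap ?S' a b" by (simp add: gaps_def)
    have "a - 1 \<noteq> s" "b \<noteq> s" using g unfolding is_gap_def busy_def by auto
    then show "(a,b) \<in> ?G" using g h(2) unfolding gaps_def is_gap_def busy_def by auto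
  qed
  show ?thesis
  proof (cases "?G' \<subseteq> ?G")
    case True
    then have "sum (gf L) ?G' \<le> sum (gf L) ?G" using finG nn by (intro sum_mono2) auto
    then show ?thesis by (simp add: energy_alt)
  next
    case False
    then obtain a b where ab: "(a,b) \<in> ?G'" "(a,b) \<notin> ?G" by auto
    then have ins: "a \<le> s" "s < b" using key by auto
    have gab: "is_gap ?S' a b" using ab by (simp add: gaps_def)
    have diff: "?G' - ?G = {(a,b)}"
    proof
      show "?G' - ?G \<subseteq> {(a,b)}"
      proof
        fix x assume x: "x \<in> ?G' - ?G"
        obtain a' b' where xe: "x = (a',b')" by (cases x)
        then have "a' \<le> s" "s < b'" using key x by auto
        moreover have "is_gap ?S' a' b'" using x xe by (simp add: gaps_def)
        ultimately show "x \<in> {(a,b)}" using gap_unique[OF gab, of a' b' s] ins xe by auto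
      qed
    qed (use ab in auto)
    have split': "?G' = (?G' \<inter> ?G) \<union> {(a,b)}" using diff by blast
    have e1: "sum (gf L) ?G' = sum (gf L) (?G' \<inter> ?G) + gf L (a,b)"
      using finG' ab by (subst split') (simp add: sum.union_disjoint)
    define X where "X = (if a < s then {(a,s)} else {}) \<union> (if s+1 < b then {(s+1,b)} else {})"
    have X1: "a < s \<Longrightarrow> (a,s) \<in> ?G - ?G'"
    proof -
      assume as: "a < s"
      have "a - 1 \<noteq> s" using as by auto
      moreover have "\<forall>x. a \<le> x \<and> x < s \<longrightarrow> S x = None"
        using gab ins unfolding is_gap_def busy_def by force
      ultimately have "is_gap S a s" using gab as bs ins unfolding is_gap_def busy_def
        by (auto split: if_splits)
      moreover have "\<not> is_gap ?S' a s" unfolding is_gap_def busy_def by auto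
      ultimately show ?thesis by (simp add: gaps_def)
    qed
    have X2: "s+1 < b \<Longrightarrow> (s+1,b) \<in> ?G - ?G'"
    proof -
      assume sb: "s+1 < b"
      have "is_gap S (s+1) b" using gab sb bs ins unfolding is_gap_def busy_def
        by (auto split: if_splits)
      moreover have "\<not> is_gap ?S' (s+1) b" unfolding is_gap_def busy_def by auto
      ultimately show ?thesis by (simp add: gaps_def)
    qed
    have XD: "X \<subseteq> ?G - ?G'" using X1 X2 unfolding X_def by auto
    have sX: "sum (gf L) X = (if a < s then gf L (a,s) else 0) + (if s+1 < b then gf L (s+1,b) else 0)"
      unfolding X_def by auto
    have "sum (gf L) X \<le> sum (gf L) (?G - ?G')"
      using XD finG nn by (intro sum_mono2) auto
    moreover have "sum (gf L) ?G = sum (gf L) (?G' \<inter> ?G) + sum (gf L) (?G - ?G')"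
    proof -
      have "?G = (?G' \<inter> ?G) \<union> (?G - ?G')" by blast
      then show ?thesis using finG
        by (metis (no_types) Diff_Diff_Int inf.commute sum.subset_diff Diff_subset)
    qed
    moreover have "gf L (a,b) \<le> sum (gf L) X + 1"
    proof -
      have e: "gf L (a,b) = min (real (b-a)) L" "gf L (a,s) = min (real (s-a)) L"
        "gf L (s+1,b) = min (real (b-(s+1))) L" by (simp_all only: gf_def prod.case)
      show ?thesis unfolding sX e using min_split[OF L0 ins] by linarith
    qed
    ultimately show ?thesis using e1 by (simp add: energy_alt)
  qed
qed

lemma feasible_support_finite:
  assumes "feasible n p r d S"
  shows "finite {x. S x \<noteq> None}"
proof -
  have "{x. S x \<noteq> None} = (\<Union>j<n. {x. S x = Some j})"
    using assms unfolding feasible_def by auto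
  then show ?thesis using assms unfolding feasible_def by auto
qed

lemma feasible_finite:
  "finite {S. feasible n p r d S}"
proof -
  define D where "D = Max (insert 0 (d ` {..<n}))"
  have dD: "\<And>j. j < n \<Longrightarrow> d j \<le> D" unfolding D_def by auto
  have "{S. feasible n p r d S} \<subseteq>
        {f. \<forall>x. (x \<in> {..<D} \<longrightarrow> f x \<in> insert None (Some ` {..<n})) \<and> (x \<notin> {..<D} \<longrightarrow> f x = None)}"
  proof -
    have "(x \<in> {..<D} \<longrightarrow> S x \<in> insert None (Some ` {..<n})) \<and> (x \<notin> {..<D} \<longrightarrow> S x = None)"
      if f: "feasible n p r d S" for S x
    proof (cases "S x")
      case None then show ?thesis by auto
    next
      case (Some j)
      have "j < n" "x < d j" using f Some unfolding feasible_def by auto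
      then show ?thesis using dD[of j] Some by auto
    qed
    then show ?thesis by blast
  qed
  moreover have "finite {f. \<forall>x. (x \<in> {..<D} \<longrightarrow> f x \<in> insert None (Some ` {..<n})) \<and> (x \<notin> {..<D} \<longrightarrow> f x = None)}"
    by (rule finite_set_of_finite_funs) auto
  ultimately show ?thesis by (rule finite_subset)
qed

theorem lemma12:
  fixes n :: nat and p r d :: "nat \<Rightarrow> nat" and L :: real
  assumes "L \<ge> 0"
    and "\<forall>j<n. p j \<ge> 1"
    and "\<exists>S. feasible n p r d S"
  shows "\<exists>S. optimal n p r d L S \<and>
           (\<forall>u t j. is_gap S u t \<and> real (t - u) \<le> L \<and> j < n \<and> completion S j \<ge> t
                 \<longrightarrow> r j \<ge> t)"
proof -
  define F where "F = {S. feasible n p r d S}"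
  have finF: "finite F" unfolding F_def by (rule feasible_finite)
  have neF: "F \<noteq> {}" using assms(3) unfolding F_def by auto
  define m where "m = Min (energy L ` F)"
  have mle: "\<And>S. S \<in> F \<Longrightarrow> m \<le> energy L S" unfolding m_def using finF by simp
  have "m \<in> energy L ` F" unfolding m_def using finF neF by simp
  then obtain S0 where S0: "S0 \<in> F" "energy L S0 = m" by auto
  define Opt where "Opt = {S\<in>F. energy L S = m}"
  define P where "P = (\<lambda>S::schedule. \<Sum>{x. S x \<noteq> None})"
  define S where "S = arg_min P (\<lambda>S. S \<in> Opt)"
  have "S0 \<in> Opt" using S0 unfolding Opt_def by auto
  from arg_min_nat_lemma[of "\<lambda>S. S \<in> Opt", OF this, of P]
  have SO: "S \<in> Opt" and Smin: "\<And>S'. S' \<in> Opt \<Longrightarrow> P S \<le> P S'" unfolding S_def by auto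
  have feas: "feasible n p r d S" and eS: "energy L S = m" using SO unfolding Opt_def F_def by auto
  have opt: "optimal n p r d L S"
    unfolding optimal_def using feas eS mle unfolding F_def by auto
  have finS: "finite {x. S x \<noteq> None}" using feasible_support_finite[OF feas] .
  have rprop: "r j \<ge> t" if g: "is_gap S u t" and sm: "real (t - u) \<le> L" and jn: "j < n"
    and cj: "completion S j \<ge> t" for u t j
  proof (rule ccontr)
    assume "\<not> r j \<ge> t"
    then have rj: "r j < t" by simp
    define A where "A = {x. S x = Some j}"
    have finA: "finite A" and cA: "card A = p j"
      and rng: "\<And>x. x \<in> A \<Longrightarrow> r j \<le> x \<and> x < d j"
      using feas jn unfolding feasible_def A_def by auto
    have "A \<noteq> {}" using cA assms(2) jn by auto
    define s where "s = Max A"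
    have sA: "s \<in> A" unfolding s_def using finA \<open>A \<noteq> {}\<close> by simp
    have ut: "0 < u" "u < t" using g unfolding is_gap_def by auto
    have idle: "S (t-1) = None" using g ut unfolding is_gap_def busy_def by auto
    have "s + 1 \<ge> t" using cj unfolding completion_def s_def A_def by simp
    moreover have "s \<noteq> t - 1" using sA idle unfolding A_def by auto
    ultimately have st: "s \<ge> t" by simp
    have Ss: "S s = Some j" using sA unfolding A_def by simp
    define S1 where "S1 = S(t-1 := Some j)"
    define S' where "S' = S1(s := None)"
    have e1: "energy L S1 = energy L S - 1"
      unfolding S1_def by (rule energy_fill[OF g sm finS])
    have fin1: "finite {x. S1 x \<noteq> None}"
    proof -
      have "{x. S1 x \<noteq> None} \<subseteq> insert (t-1) {x. S x \<noteq> None}" unfolding S1_def by auto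
      then show ?thesis using finS finite_subset by auto
    qed
    have "S1 s \<noteq> None" unfolding S1_def using st ut Ss by auto
    from energy_idle[OF this fin1 assms(1)]
    have "energy L S' \<le> energy L S" unfolding S'_def using e1 by simp
    have rngS': "r k \<le> x \<and> x < d k" if kn: "k < n" and xk: "S' x = Some k" for k x
    proof -
      have sne: "s \<noteq> t - 1" using st ut by simp
    show "r k \<le> x \<and> x < d k"
      proof (cases "x = t - 1")
        case True
        then have "S' x = Some j" unfolding S'_def S1_def using sne by simp
        then have "k = j" using xk by simp
        then show ?thesis using True rj rng[OF sA] st ut by auto
      next
        case False
        have "x \<noteq> s" using xk unfolding S'_def by (auto simp: fun_upd_def)
        then have "S x = Some k" using xk False unfolding S'_def S1_def by simp
        then show ?thesis using feas kn unfolding feasible_def by auto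
      qed
    qed
    have feas': "feasible n p r d S'"
      unfolding feasible_def
    proof (intro conjI allI impI)
      fix x k assume "S' x = Some k"
      then show "k < n" using feas jn unfolding S'_def S1_def feasible_def
        by (auto split: if_splits)
    next
      fix k assume kn: "k < n"
      show "finite {x. S' x = Some k}"
        by (rule finite_subset[of _ "{x. S' x \<noteq> None}"])
          (auto intro: finite_subset[OF _ fin1] simp: S'_def)
      show "card {x. S' x = Some k} = p k"
      proof (cases "k = j")
        case True
        have "{x. S' x = Some k} = insert (t-1) (A - {s})"
          using True st ut unfolding S'_def S1_def A_def by auto
        moreover have "t - 1 \<notin> A - {s}" using idle unfolding A_def by auto
        ultimately have "card {x. S' x = Some k} = card (A - {s}) + 1"
          using finA by simp
        also have "\<dots> = p j"
        proof -
          have "card A > 0" using finA sA card_gt_0_iff by blast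
          then show ?thesis using cA sA finA by (simp add: card_Diff_singleton)
        qed
        finally show ?thesis using True by simp
      next
        case False
        have "{x. S' x = Some k} = {x. S x = Some k}"
          using False Ss idle unfolding S'_def S1_def by auto
        then show ?thesis using feas kn unfolding feasible_def by auto
      qed
      fix x assume xk: "S' x = Some k"
      show "r k \<le> x" using rngS'[OF kn xk] by simp
      show "x < d k" using rngS'[OF kn xk] by simp
    qed
    then have "m \<le> energy L S'" using mle unfolding F_def by auto
    then have "S' \<in> Opt" using \<open>energy L S' \<le> energy L S\<close> eS feas' unfolding Opt_def F_def by auto
    then have "P S \<le> P S'" by (rule Smin)
    moreover have "P S' < P S"
    proof -
      let ?B = "{x. S x \<noteq> None}"
      have B': "{x. S' x \<noteq> None} = insert (t-1) (?B - {s})"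
        using st ut unfolding S'_def S1_def by auto
      have nin: "t - 1 \<notin> ?B - {s}" using idle by auto
      have sB: "s \<in> ?B" using Ss by auto
      have "P S' = (t-1) + \<Sum>(?B - {s})" unfolding P_def B' using finS nin by simp
      moreover have "P S = s + \<Sum>(?B - {s})" unfolding P_def using finS sB
        by (simp add: sum.remove)
      ultimately show ?thesis using st ut by simp
    qed
    ultimately show False by simp
  qed
  show ?thesis using opt rprop by blast
qed

end
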